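(* Let $A$ be a finite-dimensional $k$-algebra and $Y\in\operatorname{mod}A$ such that every short exact sequence $0\to X\to Y'\to S\to0$ with $Y'$ a submodule of $Y$ and $S$ a simple $A$-module is perfect exact. Then $Y^\ast=0$ if and only if $S^\ast=0$ for every composition factor $S$ of $Y$.
   Context: $\operatorname{mod}A$ finitely generated right modules; $(-)^\ast=\operatorname{Hom}_A(-,A)$. A short exact sequence $0\to X\to Y\to Z\to0$ is perfect exact if $0\to Z^\ast\to Y^\ast\to X^\ast\to0$ is exact. *)

theory Defs
  imports "HOL-Algebra.Embedded_Algebras" "HOL-Library.FuncSet"
begin

definition fd_algebra :: "'a set \<Rightarrow> ('a, 'b) ring_scheme \<Rightarrow> bool" where
  "fd_algebra k A \<longleftrightarrow> ring A \<and> subfield k A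
     \<and> (\<forall>c\<in>k. \<forall>a\<in>carrier A. c \<otimes>\<^bsub>A\<^esub> a = a \<otimes>\<^bsub>A\<^esub> c)
     \<and> ring.finite_dimension A k (carrier A)"

record ('m, 'a) rmod =
  mcarrier :: "'m set"
  madd :: "'m \<Rightarrow> 'm \<Rightarrow> 'm"
  mzero :: 'm
  mact :: "'m \<Rightarrow> 'a \<Rightarrow> 'm"

definition rmodule :: "('a, 'b) ring_scheme \<Rightarrow> ('m, 'a) rmod \<Rightarrow> bool" where
  "rmodule A M \<longleftrightarrow> ring A
     \<and> mzero M \<in> mcarrier M
     \<and> (\<forall>x\<in>mcarrier M. \<forall>y\<in>mcarrier M. madd M x y \<in> mcarrier M)
     \<and> (\<forall>x\<in>mcarrier M. \<forall>y\<in>mcarrier M. \<forall>z\<in>mcarrier M.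
           madd M (madd M x y) z = madd M x (madd M y z))
     \<and> (\<forall>x\<in>mcarrier M. \<forall>y\<in>mcarrier M. madd M x y = madd M y x)
     \<and> (\<forall>x\<in>mcarrier M. madd M (mzero M) x = x)
     \<and> (\<forall>x\<in>mcarrier M. \<exists>y\<in>mcarrier M. madd M x y = mzero M)
     \<and> (\<forall>x\<in>mcarrier M. \<forall>a\<in>carrier A. mact M x a \<in> mcarrier M)
     \<and> (\<forall>x\<in>mcarrier M. \<forall>y\<in>mcarrier M. \<forall>a\<in>carrier A.
           mact M (madd M x y) a = madd M (mact M x a) (mact M y a))
     \<and> (\<forall>x\<in>mcarrier M. \<forall>a\<in>carrier A. \<forall>b\<in>carrier A.
           mact M x (a \<oplus>\<^bsub>A\<^esub> b) = madd M (mact M x a) (mact M x b))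
     \<and> (\<forall>x\<in>mcarrier M. \<forall>a\<in>carrier A. \<forall>b\<in>carrier A.
           mact M x (a \<otimes>\<^bsub>A\<^esub> b) = mact M (mact M x a) b)
     \<and> (\<forall>x\<in>mcarrier M. mact M x \<one>\<^bsub>A\<^esub> = x)"

text \<open>Submodules (closure under the action by -1 gives closure under negation).\<close>

definition submod :: "('a, 'b) ring_scheme \<Rightarrow> ('m, 'a) rmod \<Rightarrow> 'm set \<Rightarrow> bool" where
  "submod A M N \<longleftrightarrow> N \<subseteq> mcarrier M \<and> mzero M \<in> N
     \<and> (\<forall>x\<in>N. \<forall>y\<in>N. madd M x y \<in> N)
     \<and> (\<forall>x\<in>N. \<forall>a\<in>carrier A. mact M x a \<in> N)"

definition restr :: "('m, 'a) rmod \<Rightarrow> 'm set \<Rightarrow> ('m, 'a) rmod" where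
  "restr M N = M\<lparr>mcarrier := N\<rparr>"

definition fin_gen :: "('a, 'b) ring_scheme \<Rightarrow> ('m, 'a) rmod \<Rightarrow> bool" where
  "fin_gen A M \<longleftrightarrow> (\<exists>G. finite G \<and> G \<subseteq> mcarrier M
      \<and> (\<forall>N. submod A M N \<and> G \<subseteq> N \<longrightarrow> N = mcarrier M))"

definition modA :: "('a, 'b) ring_scheme \<Rightarrow> ('m, 'a) rmod \<Rightarrow> bool" where
  "modA A M \<longleftrightarrow> rmodule A M \<and> fin_gen A M"

definition simple_mod :: "('a, 'b) ring_scheme \<Rightarrow> ('m, 'a) rmod \<Rightarrow> bool" where
  "simple_mod A M \<longleftrightarrow> rmodule A M \<and> mcarrier M \<noteq> {mzero M}
     \<and> (\<forall>N. submod A M N \<longrightarrow> N = {mzero M} \<or> N = mcarrier M)"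

definition mcoset :: "('m, 'a) rmod \<Rightarrow> 'm set \<Rightarrow> 'm \<Rightarrow> 'm set" where
  "mcoset M N x = {madd M x n | n. n \<in> N}"

definition quot :: "('m, 'a) rmod \<Rightarrow> 'm set \<Rightarrow> ('m set, 'a) rmod" where
  "quot M N = \<lparr> mcarrier = mcoset M N ` mcarrier M,
                madd = (\<lambda>X Y. {madd M x y | x y. x \<in> X \<and> y \<in> Y}),
                mzero = N,
                mact = (\<lambda>X a. \<Union>x\<in>X. mcoset M N (mact M x a)) \<rparr>"

definition rhom :: "('a, 'b) ring_scheme \<Rightarrow> ('m, 'a) rmod \<Rightarrow> ('n, 'a) rmod \<Rightarrow> ('m \<Rightarrow> 'n) \<Rightarrow> bool" where
  "rhom A M N f \<longleftrightarrow> (\<forall>x\<in>mcarrier M. f x \<in> mcarrier N)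
     \<and> (\<forall>x\<in>mcarrier M. \<forall>y\<in>mcarrier M. f (madd M x y) = madd N (f x) (f y))
     \<and> (\<forall>x\<in>mcarrier M. \<forall>a\<in>carrier A. f (mact M x a) = mact N (f x) a)"

definition regmod :: "('a, 'b) ring_scheme \<Rightarrow> ('a, 'a) rmod" where
  "regmod A = \<lparr> mcarrier = carrier A, madd = (\<oplus>\<^bsub>A\<^esub>), mzero = \<zero>\<^bsub>A\<^esub>, mact = (\<otimes>\<^bsub>A\<^esub>) \<rparr>"

text \<open>M^* = Hom_A(M, A), with homomorphisms represented extensionally on the carrier.\<close>

definition dual :: "('a, 'b) ring_scheme \<Rightarrow> ('m, 'a) rmod \<Rightarrow> ('m \<Rightarrow> 'a) set" where
  "dual A M = {f. rhom A M (regmod A) f \<and> f \<in> extensional (mcarrier M)}"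

definition dual_zero_elem :: "('a, 'b) ring_scheme \<Rightarrow> ('m, 'a) rmod \<Rightarrow> 'm \<Rightarrow> 'a" where
  "dual_zero_elem A M = (\<lambda>x\<in>mcarrier M. \<zero>\<^bsub>A\<^esub>)"

definition dual_is_zero :: "('a, 'b) ring_scheme \<Rightarrow> ('m, 'a) rmod \<Rightarrow> bool" where
  "dual_is_zero A M \<longleftrightarrow> dual A M = {dual_zero_elem A M}"

definition dual_map :: "('m, 'a) rmod \<Rightarrow> ('m \<Rightarrow> 'n) \<Rightarrow> ('n \<Rightarrow> 'a) \<Rightarrow> ('m \<Rightarrow> 'a)" where
  "dual_map M f = (\<lambda>\<phi>. \<lambda>x\<in>mcarrier M. \<phi> (f x))"

definition short_exact ::
  "('a, 'b) ring_scheme \<Rightarrow> ('x, 'a) rmod \<Rightarrow> ('y, 'a) rmod \<Rightarrow> ('z, 'a) rmod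
     \<Rightarrow> ('x \<Rightarrow> 'y) \<Rightarrow> ('y \<Rightarrow> 'z) \<Rightarrow> bool" where
  "short_exact A X Y Z f g \<longleftrightarrow> rhom A X Y f \<and> rhom A Y Z g
     \<and> inj_on f (mcarrier X)
     \<and> g ` mcarrier Y = mcarrier Z
     \<and> f ` mcarrier X = {y \<in> mcarrier Y. g y = mzero Z}"

definition perfect_exact ::
  "('a, 'b) ring_scheme \<Rightarrow> ('x, 'a) rmod \<Rightarrow> ('y, 'a) rmod \<Rightarrow> ('z, 'a) rmod
     \<Rightarrow> ('x \<Rightarrow> 'y) \<Rightarrow> ('y \<Rightarrow> 'z) \<Rightarrow> bool" where
  "perfect_exact A X Y Z f g \<longleftrightarrow> short_exact A X Y Z f g
     \<and> inj_on (dual_map Y g) (dual A Z)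
     \<and> dual_map Y g ` dual A Z = {\<psi> \<in> dual A Y. dual_map X f \<psi> = dual_zero_elem A X}
     \<and> dual_map X f ` dual A Y = dual A X"

definition comp_series :: "('a, 'b) ring_scheme \<Rightarrow> ('m, 'a) rmod \<Rightarrow> (nat \<Rightarrow> 'm set) \<Rightarrow> nat \<Rightarrow> bool" where
  "comp_series A Y c n \<longleftrightarrow> c 0 = {mzero Y} \<and> c n = mcarrier Y
     \<and> (\<forall>i\<le>n. submod A Y (c i))
     \<and> (\<forall>i<n. c i \<subseteq> c (Suc i) \<and> simple_mod A (quot (restr Y (c (Suc i))) (c i)))"

text \<open>The composition factors of Y are (up to isomorphism) the factors of a composition series.\<close>

definition comp_factor_dual_zero :: "('a, 'b) ring_scheme \<Rightarrow> ('m, 'a) rmod \<Rightarrow> bool" where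
  "comp_factor_dual_zero A Y \<longleftrightarrow> (\<forall>c n i. comp_series A Y c n \<and> i < n
       \<longrightarrow> dual_is_zero A (quot (restr Y (c (Suc i))) (c i)))"

end

theory Submission
  imports Defs
begin

locale setting =
  fixes A :: "('a, 'b) ring_scheme" and Y :: "('m, 'a) rmod" and k :: "'a set"
  assumes rm: "rmodule A Y"
  and sf: "subfield k A"
  and central: "\<forall>c\<in>k. \<forall>a\<in>carrier A. c \<otimes>\<^bsub>A\<^esub> a = a \<otimes>\<^bsub>A\<^esub> c"
begin

abbreviation "C \<equiv> mcarrier Y"
abbreviation pl (infixl "+\<^sub>Y" 65) where "pl \<equiv> madd Y"
abbreviation sc (infixl "\<cdot>" 70) where "sc \<equiv> mact Y"
abbreviation "zY \<equiv> mzero Y"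

lemma ringA: "ring A" using rm unfolding rmodule_def by auto
lemma z_in[simp]: "zY \<in> C" using rm unfolding rmodule_def by auto
lemma add_in[simp]: "x \<in> C \<Longrightarrow> y \<in> C \<Longrightarrow> x +\<^sub>Y y \<in> C" using rm unfolding rmodule_def by auto
lemma add_assoc: "x \<in> C \<Longrightarrow> y \<in> C \<Longrightarrow> w \<in> C \<Longrightarrow> x +\<^sub>Y y +\<^sub>Y w = x +\<^sub>Y (y +\<^sub>Y w)" using rm unfolding rmodule_def by auto
lemma add_comm: "x \<in> C \<Longrightarrow> y \<in> C \<Longrightarrow> x +\<^sub>Y y = y +\<^sub>Y x" using rm unfolding rmodule_def by auto
lemma lzero[simp]: "x \<in> C \<Longrightarrow> zY +\<^sub>Y x = x" using rm unfolding rmodule_def by auto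
lemma rzero[simp]: "x \<in> C \<Longrightarrow> x +\<^sub>Y zY = x" using add_comm lzero z_in by metis
lemma inv_ex: "x \<in> C \<Longrightarrow> \<exists>y\<in>C. x +\<^sub>Y y = zY" using rm unfolding rmodule_def by (simp only: Ball_def)
lemma sc_in[simp]: "x \<in> C \<Longrightarrow> a \<in> carrier A \<Longrightarrow> x \<cdot> a \<in> C" using rm unfolding rmodule_def by auto
lemma sc_ldist: "x \<in> C \<Longrightarrow> y \<in> C \<Longrightarrow> a \<in> carrier A \<Longrightarrow> (x +\<^sub>Y y) \<cdot> a = x \<cdot> a +\<^sub>Y y \<cdot> a" using rm unfolding rmodule_def by auto
lemma sc_rdist: "x \<in> C \<Longrightarrow> a \<in> carrier A \<Longrightarrow> b \<in> carrier A \<Longrightarrow> x \<cdot> (a \<oplus>\<^bsub>A\<^esub> b) = x \<cdot> a +\<^sub>Y x \<cdot> b" using rm unfolding rmodule_def by auto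
lemma sc_assoc: "x \<in> C \<Longrightarrow> a \<in> carrier A \<Longrightarrow> b \<in> carrier A \<Longrightarrow> x \<cdot> (a \<otimes>\<^bsub>A\<^esub> b) = x \<cdot> a \<cdot> b" using rm unfolding rmodule_def by auto
lemma sc_one[simp]: "x \<in> C \<Longrightarrow> x \<cdot> \<one>\<^bsub>A\<^esub> = x" using rm unfolding rmodule_def by auto

lemma cancel: assumes "x \<in> C" "y \<in> C" "w \<in> C" "x +\<^sub>Y y = x +\<^sub>Y w" shows "y = w"
proof -
  obtain x' where x': "x' \<in> C" "x +\<^sub>Y x' = zY" using inv_ex assms(1) by blast
  have "x' +\<^sub>Y (x +\<^sub>Y y) = x' +\<^sub>Y (x +\<^sub>Y w)" using assms by simp
  then show ?thesis using x' assms by (metis add_assoc add_comm lzero)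
qed

lemma sc_zero[simp]: assumes "x \<in> C" shows "x \<cdot> \<zero>\<^bsub>A\<^esub> = zY"
proof -
  interpret ring A by (rule ringA)
  have "x \<cdot> \<zero>\<^bsub>A\<^esub> +\<^sub>Y x \<cdot> \<zero>\<^bsub>A\<^esub> = x \<cdot> \<zero>\<^bsub>A\<^esub> +\<^sub>Y zY"
    using sc_rdist[OF assms, of "\<zero>\<^bsub>A\<^esub>" "\<zero>\<^bsub>A\<^esub>"] assms by simp
  then show ?thesis using cancel assms by (meson sc_in z_in zero_closed)
qed

lemma zero_sc[simp]: assumes "a \<in> carrier A" shows "zY \<cdot> a = zY"
proof -
  have "zY \<cdot> a +\<^sub>Y zY \<cdot> a = zY \<cdot> a +\<^sub>Y zY"
    using sc_ldist[of zY zY a] assms by simp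
  then show ?thesis using cancel assms by (meson sc_in z_in)
qed

lemma neg_sc: assumes "x \<in> C" "a \<in> carrier A" shows "x \<cdot> a +\<^sub>Y x \<cdot> (\<ominus>\<^bsub>A\<^esub> a) = zY"
proof -
  interpret ring A by (rule ringA)
  show ?thesis using sc_rdist[OF assms(1,2), of "\<ominus>\<^bsub>A\<^esub> a"] assms by (simp add: r_neg)
qed

lemma k_sub: "k \<subseteq> carrier A" using subfieldE(3)[OF sf] .

lemma rearr: "a \<in> C \<Longrightarrow> b \<in> C \<Longrightarrow> c \<in> C \<Longrightarrow> d \<in> C \<Longrightarrow> (a +\<^sub>Y b) +\<^sub>Y (c +\<^sub>Y d) = (a +\<^sub>Y c) +\<^sub>Y (b +\<^sub>Y d)"
proof -
  assume h: "a \<in> C" "b \<in> C" "c \<in> C" "d \<in> C"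
  have "(a +\<^sub>Y b) +\<^sub>Y (c +\<^sub>Y d) = a +\<^sub>Y (b +\<^sub>Y (c +\<^sub>Y d))" using h by (simp add: add_assoc)
  also have "b +\<^sub>Y (c +\<^sub>Y d) = c +\<^sub>Y (b +\<^sub>Y d)" using h by (metis add_assoc add_comm)
  also have "a +\<^sub>Y (c +\<^sub>Y (b +\<^sub>Y d)) = (a +\<^sub>Y c) +\<^sub>Y (b +\<^sub>Y d)" using h by (simp add: add_assoc)
  finally show ?thesis .
qed

lemma k_ring: "c \<in> k \<Longrightarrow> c \<in> carrier A" using k_sub by auto
lemma k_add: "c \<in> k \<Longrightarrow> d \<in> k \<Longrightarrow> c \<oplus>\<^bsub>A\<^esub> d \<in> k" using subringE(7)[OF subfieldE(1)[OF sf]] by auto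
lemma k_mult: "c \<in> k \<Longrightarrow> d \<in> k \<Longrightarrow> c \<otimes>\<^bsub>A\<^esub> d \<in> k" using subringE(6)[OF subfieldE(1)[OF sf]] by auto
lemma k_zero: "\<zero>\<^bsub>A\<^esub> \<in> k" using subringE(2)[OF subfieldE(1)[OF sf]] by auto
lemma k_one: "\<one>\<^bsub>A\<^esub> \<in> k" using subringE(3)[OF subfieldE(1)[OF sf]] by auto
lemma k_neg: "c \<in> k \<Longrightarrow> \<ominus>\<^bsub>A\<^esub> c \<in> k" using subringE(5)[OF subfieldE(1)[OF sf]] by auto

definition ksub :: "'m set \<Rightarrow> bool" where
  "ksub B \<longleftrightarrow> B \<subseteq> C \<and> zY \<in> B \<and> (\<forall>x\<in>B. \<forall>y\<in>B. x +\<^sub>Y y \<in> B) \<and> (\<forall>x\<in>B. \<forall>c\<in>k. x \<cdot> c \<in> B)"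

fun lin :: "'m set \<Rightarrow> 'm list \<Rightarrow> 'm set" where
  "lin B [] = B"
| "lin B (u # us) = {u \<cdot> c +\<^sub>Y v | c v. c \<in> k \<and> v \<in> lin B us}"

lemma lin_ConsI: "c \<in> k \<Longrightarrow> v \<in> lin B us \<Longrightarrow> u \<cdot> c +\<^sub>Y v \<in> lin B (u # us)"
  by auto

lemma lin_ConsE: "x \<in> lin B (u # us) \<Longrightarrow> (\<And>c v. c \<in> k \<Longrightarrow> v \<in> lin B us \<Longrightarrow> x = u \<cdot> c +\<^sub>Y v \<Longrightarrow> P) \<Longrightarrow> P"
  by auto

declare lin.simps(2)[simp del]

lemma ksub_lin: assumes "ksub B" "set us \<subseteq> C" shows "ksub (lin B us)"
  using assms(2)
proof (induction us)
  case Nil then show ?case using assms(1) by simp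
next
  case (Cons u us)
  then have u: "u \<in> C" and IH: "ksub (lin B us)" by auto
  let ?L = "lin B (u # us)"
  have sub: "lin B us \<subseteq> C" using IH unfolding ksub_def by auto
  have "?L \<subseteq> C"
  proof
    fix x assume "x \<in> ?L"
    then obtain c v where "c \<in> k" "v \<in> lin B us" "x = u \<cdot> c +\<^sub>Y v" by (rule lin_ConsE)
    then show "x \<in> C" using sub u k_ring by auto
  qed
  moreover have "zY \<in> ?L"
  proof -
    have "zY = u \<cdot> \<zero>\<^bsub>A\<^esub> +\<^sub>Y zY" using u by simp
    moreover have "zY \<in> lin B us" using IH unfolding ksub_def by blast
    ultimately show ?thesis using lin_ConsI[OF k_zero, of zY B us u] by simp
  qed
  moreover have "\<forall>x\<in>?L. \<forall>y\<in>?L. x +\<^sub>Y y \<in> ?L"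
  proof (intro ballI)
    fix x y assume xL: "x \<in> ?L" and yL: "y \<in> ?L"
    obtain c v where cv: "c \<in> k" "v \<in> lin B us" "x = u \<cdot> c +\<^sub>Y v" using xL by (rule lin_ConsE)
    obtain d w where dw: "d \<in> k" "w \<in> lin B us" "y = u \<cdot> d +\<^sub>Y w" using yL by (rule lin_ConsE)
    have vw: "v \<in> C" "w \<in> C" using cv dw sub by auto
    have "x +\<^sub>Y y = u \<cdot> (c \<oplus>\<^bsub>A\<^esub> d) +\<^sub>Y (v +\<^sub>Y w)"
      using cv dw u vw k_ring rearr[of "u \<cdot> c" v "u \<cdot> d" w] sc_rdist[of u c d] by simp
    moreover have "v +\<^sub>Y w \<in> lin B us" using IH cv dw unfolding ksub_def by auto
    ultimately show "x +\<^sub>Y y \<in> ?L" using k_add[OF cv(1) dw(1)] lin_ConsI by simp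
  qed
  moreover have "\<forall>x\<in>?L. \<forall>d\<in>k. x \<cdot> d \<in> ?L"
  proof (intro ballI)
    fix x d assume xL: "x \<in> ?L" and "d \<in> k"
    from xL obtain c v where cv: "c \<in> k" "v \<in> lin B us" "x = u \<cdot> c +\<^sub>Y v" by (rule lin_ConsE)
    have "x \<cdot> d = u \<cdot> (c \<otimes>\<^bsub>A\<^esub> d) +\<^sub>Y v \<cdot> d"
      using cv u sub k_ring \<open>d \<in> k\<close> by (simp add: sc_ldist sc_assoc subsetD)
    moreover have "v \<cdot> d \<in> lin B us" using IH cv \<open>d \<in> k\<close> unfolding ksub_def by auto
    ultimately show "x \<cdot> d \<in> ?L" using k_mult[OF cv(1) \<open>d \<in> k\<close>] lin_ConsI by simp
  qed
  ultimately show ?case unfolding ksub_def by blast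
qed

lemma lin_sub_C: assumes "ksub B" "set us \<subseteq> C" shows "lin B us \<subseteq> C"
  using ksub_lin[OF assms] unfolding ksub_def by (elim conjE)

lemma lin_Cons_sup: assumes "ksub B" "set us \<subseteq> C" "u \<in> C" shows "lin B us \<subseteq> lin B (u # us)"
proof
  fix x assume x: "x \<in> lin B us"
  then have "x \<in> C" using lin_sub_C[OF assms(1,2)] by blast
  then have "x = u \<cdot> \<zero>\<^bsub>A\<^esub> +\<^sub>Y x" using assms by simp
  then show "x \<in> lin B (u # us)" using x lin_ConsI[OF k_zero, of x B us u] by simp
qed

lemma base_sub_lin: assumes "ksub B" "set us \<subseteq> C" shows "B \<subseteq> lin B us"
  using assms(2)
proof (induction us)
  case Nil then show ?case by simp
next
  case (Cons u us)
  then have "B \<subseteq> lin B us" "lin B us \<subseteq> lin B (u # us)" using lin_Cons_sup[OF assms(1), of us u] by auto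
  then show ?case by blast
qed

lemma list_sub_lin: assumes "ksub B" "set us \<subseteq> C" shows "set us \<subseteq> lin B us"
  using assms(2)
proof (induction us)
  case Nil then show ?case by simp
next
  case (Cons u us)
  have "u = u \<cdot> \<one>\<^bsub>A\<^esub> +\<^sub>Y zY" using Cons by simp
  moreover have "zY \<in> lin B us" using ksub_lin[OF assms(1)] Cons unfolding ksub_def by auto
  ultimately have "u \<in> lin B (u # us)" using lin_ConsI[OF k_one, of zY B us u] by simp
  then show ?case using Cons lin_Cons_sup[OF assms(1)] by auto
qed

lemma lin_min: assumes "ksub W" "B \<subseteq> W" "set us \<subseteq> W" shows "lin B us \<subseteq> W"
  using assms(3)
proof (induction us)
  case Nil then show ?case using assms by simp
next
  case (Cons u us)
  show ?case
  proof
    fix x assume "x \<in> lin B (u # us)"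
    then obtain c v where "c \<in> k" "v \<in> lin B us" "x = u \<cdot> c +\<^sub>Y v" by (rule lin_ConsE)
    then show "x \<in> W" using Cons assms(1) unfolding ksub_def by auto
  qed
qed

lemma lin_mono: assumes "B \<subseteq> B'" shows "lin B us \<subseteq> lin B' us"
proof (induction us)
  case Nil then show ?case using assms by simp
next
  case (Cons u us) then show ?case by (auto simp: lin.simps(2))
qed

lemma exchange: assumes "ksub B" "set us \<subseteq> C" "x \<in> lin B us" "x \<notin> B"
  shows "\<exists>as u bs. us = as @ u # bs \<and> u \<in> lin (lin B [x]) (as @ bs)"
  using assms(2,3)
proof (induction us)
  case Nil then show ?case using assms(4) by simp
next
  case (Cons u us)
  have xC: "x \<in> C" using Cons.prems lin_sub_C[OF assms(1)] by blast
  have kB': "ksub (lin B [x])" using ksub_lin[OF assms(1)] xC by simp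
  have uC: "u \<in> C" and usC: "set us \<subseteq> C" using Cons.prems by auto
  obtain c v where cv: "c \<in> k" "v \<in> lin B us" "x = u \<cdot> c +\<^sub>Y v" using Cons.prems(2) by (rule lin_ConsE)
  have vC: "v \<in> C" using cv lin_sub_C[OF assms(1) usC] by blast
  show ?case
  proof (cases "c = \<zero>\<^bsub>A\<^esub>")
    case True
    then have "x = v" using cv uC vC by simp
    then obtain as w bs where h: "us = as @ w # bs" "w \<in> lin (lin B [x]) (as @ bs)"
      using Cons.IH usC cv by blast
    have "set (as @ bs) \<subseteq> C" using usC h by auto
    then have "w \<in> lin (lin B [x]) (u # as @ bs)" using lin_Cons_sup[OF kB' _ uC] h by blast
    then show ?thesis using h by (metis Cons_eq_appendI)
  next
    case False
    interpret R: ring A by (rule ringA)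
    have c': "c \<in> k - {\<zero>\<^bsub>A\<^esub>}" using False cv by auto
    define ci where "ci = inv\<^bsub>A\<^esub> c"
    have ci: "ci \<in> k" "c \<otimes>\<^bsub>A\<^esub> ci = \<one>\<^bsub>A\<^esub>" using R.subfield_m_inv[OF sf c'] unfolding ci_def by auto
    have ciA: "ci \<in> carrier A" "c \<in> carrier A" using ci cv k_ring by auto
    have e1: "x \<cdot> ci = u +\<^sub>Y v \<cdot> ci"
      using cv uC vC ciA ci by (simp add: sc_ldist flip: sc_assoc)
    have e2: "u = x \<cdot> ci +\<^sub>Y v \<cdot> (\<ominus>\<^bsub>A\<^esub> ci)"
      using e1 uC vC ciA neg_sc[OF vC ciA(1)] by (simp add: add_assoc)
    have L: "ksub (lin (lin B [x]) us)" using ksub_lin[OF kB' usC] .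
    have "x \<cdot> ci = x \<cdot> ci +\<^sub>Y zY" using xC ciA by simp
    then have "x \<cdot> ci \<in> lin B [x]" using ci assms(1) lin_ConsI[of ci zY B "[]" x] unfolding ksub_def by auto
    then have 1: "x \<cdot> ci \<in> lin (lin B [x]) us" using base_sub_lin[OF kB' usC] by blast
    have "B \<subseteq> lin B [x]" using base_sub_lin[OF assms(1)] xC by simp
    then have "v \<in> lin (lin B [x]) us" using lin_mono cv by blast
    then have 2: "v \<cdot> (\<ominus>\<^bsub>A\<^esub> ci) \<in> lin (lin B [x]) us" using L k_neg ci unfolding ksub_def by blast
    have "u \<in> lin (lin B [x]) us" using e2 1 2 L unfolding ksub_def by metis
    then show ?thesis by (metis append_Nil)
  qed
qed

definition spans :: "'m set \<Rightarrow> 'm list \<Rightarrow> bool" where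
  "spans N us \<longleftrightarrow> set us \<subseteq> C \<and> lin N us = C"

definition dd :: "'m set \<Rightarrow> nat" where
  "dd N = (LEAST m. \<exists>us. length us = m \<and> spans N us)"

lemma spans_mono: assumes "ksub N'" "N \<subseteq> N'" "spans N us" shows "spans N' us"
proof -
  have "lin N us \<subseteq> lin N' us" using lin_mono assms(2) .
  moreover have "lin N' us \<subseteq> C" using lin_sub_C[OF assms(1)] assms(3) unfolding spans_def by blast
  ultimately show ?thesis using assms(3) unfolding spans_def by blast
qed

lemma dd_less: assumes kN: "ksub N" and kN': "ksub N'" and sub: "N \<subseteq> N'" "N \<noteq> N'"
  and ex: "\<exists>us. spans N us"
  shows "dd N' < dd N"
proof -
  have "\<exists>us. length us = dd N \<and> spans N us"
  proof -
    from ex obtain vs where "spans N vs" by blast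
    then have "\<exists>us. length us = length vs \<and> spans N us" by blast
    then show ?thesis unfolding dd_def by (rule LeastI)
  qed
  then obtain us where us: "length us = dd N" "spans N us" by blast
  obtain x where x: "x \<in> N'" "x \<notin> N" using sub by blast
  have usC: "set us \<subseteq> C" and linC: "lin N us = C" using us unfolding spans_def by auto
  have "x \<in> C" using x kN' unfolding ksub_def by blast
  then have "x \<in> lin N us" using linC by simp
  then obtain as u bs where e: "us = as @ u # bs" "u \<in> lin (lin N [x]) (as @ bs)"
    using exchange[OF kN usC _ x(2)] by blast
  have abC: "set (as @ bs) \<subseteq> C" using usC e by auto
  have "lin N [x] \<subseteq> N'"
    using lin_min[OF kN' sub(1), of "[x]"] x by simp
  then have "lin (lin N [x]) (as @ bs) \<subseteq> lin N' (as @ bs)" by (rule lin_mono)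
  then have u': "u \<in> lin N' (as @ bs)" using e by blast
  have kL: "ksub (lin N' (as @ bs))" using ksub_lin[OF kN' abC] .
  have "set (as @ bs) \<subseteq> lin N' (as @ bs)" using list_sub_lin[OF kN' abC] .
  then have "set us \<subseteq> lin N' (as @ bs)" using u' e by auto
  moreover have "N \<subseteq> lin N' (as @ bs)" using base_sub_lin[OF kN' abC] sub by blast
  ultimately have "lin N us \<subseteq> lin N' (as @ bs)" using lin_min[OF kL] by blast
  then have "spans N' (as @ bs)" using linC lin_sub_C[OF kN' abC] abC unfolding spans_def by blast
  then have "\<exists>vs. length vs = length (as @ bs) \<and> spans N' vs" by blast
  then have "dd N' \<le> length (as @ bs)" unfolding dd_def by (rule Least_le)
  moreover have "length (as @ bs) < length us" using e by simp
  ultimately show ?thesis using us by simp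
qed

lemma submod_ksub: "submod A Y N \<Longrightarrow> ksub N"
  unfolding submod_def ksub_def using k_sub by blast

lemma submod_C: "submod A Y C"
  unfolding submod_def by simp

lemma submodD:
  assumes "submod A Y N"
  shows "N \<subseteq> C" "zY \<in> N" "\<And>x y. x \<in> N \<Longrightarrow> y \<in> N \<Longrightarrow> x +\<^sub>Y y \<in> N"
    "\<And>x a. x \<in> N \<Longrightarrow> a \<in> carrier A \<Longrightarrow> x \<cdot> a \<in> N"
  using assms unfolding submod_def by blast+

lemma neg_in: assumes "submod A Y N" "n \<in> N" shows "\<exists>n'\<in>N. n +\<^sub>Y n' = zY"
proof -
  interpret R: ring A by (rule ringA)
  have "n \<in> C" using submodD(1)[OF assms(1)] assms(2) by blast
  then have "n \<cdot> \<one>\<^bsub>A\<^esub> +\<^sub>Y n \<cdot> (\<ominus>\<^bsub>A\<^esub> \<one>\<^bsub>A\<^esub>) = zY" using neg_sc[of n "\<one>\<^bsub>A\<^esub>"] by simp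
  moreover have "n \<cdot> (\<ominus>\<^bsub>A\<^esub> \<one>\<^bsub>A\<^esub>) \<in> N" using submodD(4)[OF assms(1,2)] by simp
  ultimately show ?thesis using \<open>n \<in> C\<close> by auto
qed

lemma mcoset_restr: "mcoset (restr Y P) N = mcoset Y N"
  unfolding mcoset_def restr_def by simp

abbreviation "cs N \<equiv> mcoset Y N"

lemma cs_mem: assumes "submod A Y N" "x \<in> C" shows "x \<in> cs N x"
proof -
  have "x = x +\<^sub>Y zY" using assms by simp
  then show ?thesis using submodD(2)[OF assms(1)] unfolding mcoset_def by blast
qed

lemma cs_eq: assumes N: "submod A Y N" and x: "x \<in> C" and n: "n \<in> N" shows "cs N (x +\<^sub>Y n) = cs N x"
proof -
  have NC: "N \<subseteq> C" using submodD(1)[OF N] .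
  have nC: "n \<in> C" using n NC by blast
  obtain n' where n': "n' \<in> N" "n +\<^sub>Y n' = zY" using neg_in[OF N n] by blast
  have n'C: "n' \<in> C" using n' NC by blast
  show ?thesis
  proof
    show "cs N (x +\<^sub>Y n) \<subseteq> cs N x"
    proof
      fix w assume "w \<in> cs N (x +\<^sub>Y n)"
      then obtain m where m: "m \<in> N" "w = x +\<^sub>Y n +\<^sub>Y m" unfolding mcoset_def by blast
      have "w = x +\<^sub>Y (n +\<^sub>Y m)" using m x nC NC by (simp add: add_assoc subsetD)
      moreover have "n +\<^sub>Y m \<in> N" using submodD(3)[OF N n m(1)] .
      ultimately show "w \<in> cs N x" unfolding mcoset_def by blast
    qed
  next
    show "cs N x \<subseteq> cs N (x +\<^sub>Y n)"
    proof
      fix w assume "w \<in> cs N x"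
      then obtain m where m: "m \<in> N" "w = x +\<^sub>Y m" unfolding mcoset_def by blast
      have mC: "m \<in> C" using m NC by blast
      have "x +\<^sub>Y n +\<^sub>Y (n' +\<^sub>Y m) = x +\<^sub>Y ((n +\<^sub>Y n') +\<^sub>Y m)"
        using x nC n'C mC by (simp add: add_assoc)
      also have "\<dots> = w" using n' m mC by simp
      finally have "w = x +\<^sub>Y n +\<^sub>Y (n' +\<^sub>Y m)" by simp
      moreover have "n' +\<^sub>Y m \<in> N" using submodD(3)[OF N n'(1) m(1)] .
      ultimately show "w \<in> cs N (x +\<^sub>Y n)" unfolding mcoset_def by blast
    qed
  qed
qed

lemma cs_eq': assumes N: "submod A Y N" and x: "x \<in> C" and y: "y \<in> cs N x" shows "cs N y = cs N x"
  using y cs_eq[OF N x] unfolding mcoset_def by blast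

lemma cs_eq_iff: assumes N: "submod A Y N" and x: "x \<in> C" and y: "y \<in> C"
  shows "cs N y = cs N x \<longleftrightarrow> y \<in> cs N x"
  using cs_eq'[OF N x] cs_mem[OF N y] by blast

lemma cs_zero: assumes N: "submod A Y N" shows "cs N zY = N"
  unfolding mcoset_def using submodD(1)[OF N] by (auto, metis lzero subsetD)

lemma cs_N_iff: assumes N: "submod A Y N" and x: "x \<in> C" shows "cs N x = N \<longleftrightarrow> x \<in> N"
proof -
  have "cs N x = N \<longleftrightarrow> cs N x = cs N zY" using cs_zero[OF N] by simp
  also have "\<dots> \<longleftrightarrow> zY \<in> cs N x" using cs_eq_iff[OF N x z_in] by metis
  also have "\<dots> \<longleftrightarrow> x \<in> N"
  proof
    assume "zY \<in> cs N x"
    then obtain n where n: "n \<in> N" "zY = x +\<^sub>Y n" unfolding mcoset_def by blast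
    have "cs N zY = cs N x" using cs_eq[OF N x n(1)] n by simp
    then show "x \<in> N" using cs_mem[OF N x] cs_zero[OF N] by simp
  next
    assume "x \<in> N"
    then have "cs N x = N" using cs_eq[OF N z_in, of x] cs_zero[OF N] x by simp
    then show "zY \<in> cs N x" using submodD(2)[OF N] by simp
  qed
  finally show ?thesis .
qed

lemma cs_add: assumes N: "submod A Y N" and x: "x \<in> C" and y: "y \<in> C"
  shows "{a +\<^sub>Y b |a b. a \<in> cs N x \<and> b \<in> cs N y} = cs N (x +\<^sub>Y y)"
proof
  have NC: "N \<subseteq> C" using submodD(1)[OF N] .
  show "{a +\<^sub>Y b |a b. a \<in> cs N x \<and> b \<in> cs N y} \<subseteq> cs N (x +\<^sub>Y y)"
  proof
    fix w assume "w \<in> {a +\<^sub>Y b |a b. a \<in> cs N x \<and> b \<in> cs N y}"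
    then obtain n m where nm: "n \<in> N" "m \<in> N" "w = (x +\<^sub>Y n) +\<^sub>Y (y +\<^sub>Y m)" unfolding mcoset_def by blast
    have "w = (x +\<^sub>Y y) +\<^sub>Y (n +\<^sub>Y m)" using nm rearr[of x n y m] x y NC by blast
    then show "w \<in> cs N (x +\<^sub>Y y)" using submodD(3)[OF N nm(1,2)] unfolding mcoset_def by blast
  qed
next
  show "cs N (x +\<^sub>Y y) \<subseteq> {a +\<^sub>Y b |a b. a \<in> cs N x \<and> b \<in> cs N y}"
  proof
    fix w assume "w \<in> cs N (x +\<^sub>Y y)"
    then obtain n where n: "n \<in> N" "w = x +\<^sub>Y y +\<^sub>Y n" unfolding mcoset_def by blast
    have "w = x +\<^sub>Y (y +\<^sub>Y n)" using n x y submodD(1)[OF N] by (simp add: add_assoc subsetD)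
    moreover have "y +\<^sub>Y n \<in> cs N y" using n unfolding mcoset_def by blast
    ultimately show "w \<in> {a +\<^sub>Y b |a b. a \<in> cs N x \<and> b \<in> cs N y}" using cs_mem[OF N x] by blast
  qed
qed

lemma cs_act: assumes N: "submod A Y N" and x: "x \<in> C" and a: "a \<in> carrier A"
  shows "(\<Union>w\<in>cs N x. cs N (w \<cdot> a)) = cs N (x \<cdot> a)"
proof
  show "(\<Union>w\<in>cs N x. cs N (w \<cdot> a)) \<subseteq> cs N (x \<cdot> a)"
  proof
    fix v assume "v \<in> (\<Union>w\<in>cs N x. cs N (w \<cdot> a))"
    then obtain w where w: "w \<in> cs N x" "v \<in> cs N (w \<cdot> a)" by blast
    then obtain n where n: "n \<in> N" "w = x +\<^sub>Y n" unfolding mcoset_def by blast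
    have nC: "n \<in> C" using n submodD(1)[OF N] by blast
    have "w \<cdot> a = x \<cdot> a +\<^sub>Y n \<cdot> a" using n x nC a by (simp add: sc_ldist)
    then have "cs N (w \<cdot> a) = cs N (x \<cdot> a)" using cs_eq[OF N _ submodD(4)[OF N n(1) a]] x a by simp
    then show "v \<in> cs N (x \<cdot> a)" using w by simp
  qed
next
  show "cs N (x \<cdot> a) \<subseteq> (\<Union>w\<in>cs N x. cs N (w \<cdot> a))" using cs_mem[OF N x] by blast
qed

lemma quot_car: "mcarrier (quot (restr Y P) N) = cs N ` P"
  unfolding quot_def mcoset_restr by (simp add: restr_def)
lemma quot_zero: "mzero (quot (restr Y P) N) = N"
  unfolding quot_def by simp
lemma quot_add: assumes "submod A Y N" "x \<in> C" "y \<in> C"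
  shows "madd (quot (restr Y P) N) (cs N x) (cs N y) = cs N (x +\<^sub>Y y)"
  using cs_add[OF assms] unfolding quot_def by (simp add: restr_def)
lemma quot_act: assumes "submod A Y N" "x \<in> C" "a \<in> carrier A"
  shows "mact (quot (restr Y P) N) (cs N x) a = cs N (x \<cdot> a)"
  using cs_act[OF assms] unfolding quot_def mcoset_restr by (simp add: restr_def)

lemma rmodule_quot: assumes N: "submod A Y N" and P: "submod A Y P" and NP: "N \<subseteq> P"
  shows "rmodule A (quot (restr Y P) N)"
proof -
  let ?Q = "quot (restr Y P) N"
  have PC: "P \<subseteq> C" using submodD(1)[OF P] .
  have pC: "x \<in> P \<Longrightarrow> x \<in> C" for x using PC by blast
  have car: "mcarrier ?Q = cs N ` P" by (rule quot_car)
  have add: "\<And>x y. x \<in> P \<Longrightarrow> y \<in> P \<Longrightarrow> madd ?Q (cs N x) (cs N y) = cs N (x +\<^sub>Y y)"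
    using quot_add[OF N] pC by blast
  have act: "\<And>x a. x \<in> P \<Longrightarrow> a \<in> carrier A \<Longrightarrow> mact ?Q (cs N x) a = cs N (x \<cdot> a)"
    using quot_act[OF N] pC by blast
  have zero: "mzero ?Q = cs N zY" using quot_zero cs_zero[OF N] by simp
  have addP: "\<And>x y. x \<in> P \<Longrightarrow> y \<in> P \<Longrightarrow> x +\<^sub>Y y \<in> P" using submodD(3)[OF P] .
  have actP: "\<And>x a. x \<in> P \<Longrightarrow> a \<in> carrier A \<Longrightarrow> x \<cdot> a \<in> P" using submodD(4)[OF P] .
  have zP: "zY \<in> P" using submodD(2)[OF P] .
  interpret R: ring A by (rule ringA)
  show ?thesis unfolding rmodule_def
  proof (intro conjI ballI)
    show "ring A" by (rule ringA)
    show "mzero ?Q \<in> mcarrier ?Q" using zero car zP by simp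
  next
    fix X Z assume "X \<in> mcarrier ?Q" "Z \<in> mcarrier ?Q"
    then obtain x y where "x \<in> P" "y \<in> P" "X = cs N x" "Z = cs N y" using car by auto
    then show "madd ?Q X Z \<in> mcarrier ?Q" using add addP car by simp
  next
    fix X Z W assume "X \<in> mcarrier ?Q" "Z \<in> mcarrier ?Q" "W \<in> mcarrier ?Q"
    then obtain x y w where "x \<in> P" "y \<in> P" "w \<in> P" "X = cs N x" "Z = cs N y" "W = cs N w" using car by auto
    then show "madd ?Q (madd ?Q X Z) W = madd ?Q X (madd ?Q Z W)" using add addP pC by (simp add: add_assoc)
  next
    fix X Z assume "X \<in> mcarrier ?Q" "Z \<in> mcarrier ?Q"
    then obtain x y where "x \<in> P" "y \<in> P" "X = cs N x" "Z = cs N y" using car by auto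
    then show "madd ?Q X Z = madd ?Q Z X" using add pC add_comm by metis
  next
    fix X assume "X \<in> mcarrier ?Q"
    then obtain x where "x \<in> P" "X = cs N x" using car by auto
    then show "madd ?Q (mzero ?Q) X = X" using add zP zero pC by simp
  next
    fix X assume "X \<in> mcarrier ?Q"
    then obtain x where x: "x \<in> P" "X = cs N x" using car by auto
    have "x \<cdot> \<one>\<^bsub>A\<^esub> +\<^sub>Y x \<cdot> (\<ominus>\<^bsub>A\<^esub> \<one>\<^bsub>A\<^esub>) = zY" using neg_sc[of x "\<one>\<^bsub>A\<^esub>"] pC x by simp
    then have "madd ?Q X (cs N (x \<cdot> (\<ominus>\<^bsub>A\<^esub> \<one>\<^bsub>A\<^esub>))) = mzero ?Q"
      using add x actP zero pC by simp
    moreover have "cs N (x \<cdot> (\<ominus>\<^bsub>A\<^esub> \<one>\<^bsub>A\<^esub>)) \<in> mcarrier ?Q" using car actP x by simp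
    ultimately show "\<exists>Z\<in>mcarrier ?Q. madd ?Q X Z = mzero ?Q" by blast
  next
    fix X a assume "X \<in> mcarrier ?Q" "a \<in> carrier A"
    then obtain x where "x \<in> P" "X = cs N x" using car by auto
    then show "mact ?Q X a \<in> mcarrier ?Q" using act actP car \<open>a \<in> carrier A\<close> by simp
  next
    fix X Z a assume "X \<in> mcarrier ?Q" "Z \<in> mcarrier ?Q" "a \<in> carrier A"
    then obtain x y where "x \<in> P" "y \<in> P" "X = cs N x" "Z = cs N y" using car by auto
    then show "mact ?Q (madd ?Q X Z) a = madd ?Q (mact ?Q X a) (mact ?Q Z a)"
      using add act addP actP pC \<open>a \<in> carrier A\<close> by (simp add: sc_ldist)
  next
    fix X a b assume "X \<in> mcarrier ?Q" "a \<in> carrier A" "b \<in> carrier A"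
    then obtain x where "x \<in> P" "X = cs N x" using car by auto
    then show "mact ?Q X (a \<oplus>\<^bsub>A\<^esub> b) = madd ?Q (mact ?Q X a) (mact ?Q X b)"
      using add act addP actP pC \<open>a \<in> carrier A\<close> \<open>b \<in> carrier A\<close> by (simp add: sc_rdist)
  next
    fix X a b assume "X \<in> mcarrier ?Q" "a \<in> carrier A" "b \<in> carrier A"
    then obtain x where "x \<in> P" "X = cs N x" using car by auto
    then show "mact ?Q X (a \<otimes>\<^bsub>A\<^esub> b) = mact ?Q (mact ?Q X a) b"
      using add act addP actP pC \<open>a \<in> carrier A\<close> \<open>b \<in> carrier A\<close> by (simp add: sc_assoc)
  next
    fix X assume "X \<in> mcarrier ?Q"
    then obtain x where "x \<in> P" "X = cs N x" using car by auto
    then show "mact ?Q X \<one>\<^bsub>A\<^esub> = X" using act pC by simp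
  qed
qed

lemma submod_restr: assumes "P \<subseteq> C" shows "submod A (restr Y P) R \<longleftrightarrow> R \<subseteq> P \<and> submod A Y R"
  using assms unfolding submod_def restr_def by auto

lemma simple_quot: assumes N: "submod A Y N" and P: "submod A Y P" and NP: "N \<subseteq> P" "N \<noteq> P"
  and noint: "\<forall>R. submod A Y R \<and> N \<subseteq> R \<and> R \<subseteq> P \<longrightarrow> R = N \<or> R = P"
  shows "simple_mod A (quot (restr Y P) N)"
proof -
  let ?Q = "quot (restr Y P) N"
  have PC: "P \<subseteq> C" using submodD(1)[OF P] .
  have pC: "x \<in> P \<Longrightarrow> x \<in> C" for x using PC by blast
  have car: "mcarrier ?Q = cs N ` P" by (rule quot_car)
  have add: "\<And>x y. x \<in> P \<Longrightarrow> y \<in> P \<Longrightarrow> madd ?Q (cs N x) (cs N y) = cs N (x +\<^sub>Y y)"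
    using quot_add[OF N] pC by blast
  have act: "\<And>x a. x \<in> P \<Longrightarrow> a \<in> carrier A \<Longrightarrow> mact ?Q (cs N x) a = cs N (x \<cdot> a)"
    using quot_act[OF N] pC by blast
  have zero: "mzero ?Q = N" by (rule quot_zero)
  have "\<not> P \<subseteq> N" using NP by auto
  then obtain x where x: "x \<in> P" "x \<notin> N" by (auto simp: subset_iff)
  have csx: "cs N x \<noteq> N" using cs_N_iff[OF N pC[OF x(1)]] x by simp
  have "cs N x \<in> mcarrier ?Q" using car x(1) by simp
  then have ne: "mcarrier ?Q \<noteq> {mzero ?Q}" using csx zero by auto
  have "\<forall>Q. submod A ?Q Q \<longrightarrow> Q = {mzero ?Q} \<or> Q = mcarrier ?Q"
  proof (intro allI impI)
    fix Q assume Q: "submod A ?Q Q"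
    have Qc: "Q \<subseteq> cs N ` P" and Q0: "N \<in> Q"
      and Qa: "\<And>X Z. X \<in> Q \<Longrightarrow> Z \<in> Q \<Longrightarrow> madd ?Q X Z \<in> Q"
      and Qm: "\<And>X a. X \<in> Q \<Longrightarrow> a \<in> carrier A \<Longrightarrow> mact ?Q X a \<in> Q"
    proof -
      have "Q \<subseteq> mcarrier ?Q" "mzero ?Q \<in> Q" using Q unfolding submod_def by auto
      then show "Q \<subseteq> cs N ` P" "N \<in> Q" using car zero by simp_all
      show "\<And>X Z. X \<in> Q \<Longrightarrow> Z \<in> Q \<Longrightarrow> madd ?Q X Z \<in> Q" using Q unfolding submod_def by auto
      show "\<And>X a. X \<in> Q \<Longrightarrow> a \<in> carrier A \<Longrightarrow> mact ?Q X a \<in> Q" using Q unfolding submod_def by auto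
    qed
    define R where "R = {x \<in> P. cs N x \<in> Q}"
    have "submod A Y R" unfolding submod_def
    proof (intro conjI ballI)
      show "R \<subseteq> C" using PC unfolding R_def by blast
      show "zY \<in> R" using submodD(2)[OF P] Q0 cs_zero[OF N] unfolding R_def by simp
    next
      fix x y assume "x \<in> R" "y \<in> R"
      then have h: "x \<in> P" "y \<in> P" "cs N x \<in> Q" "cs N y \<in> Q" unfolding R_def by auto
      then have "cs N (x +\<^sub>Y y) \<in> Q" using Qa[OF h(3,4)] add[OF h(1,2)] by simp
      then show "x +\<^sub>Y y \<in> R" using submodD(3)[OF P h(1,2)] unfolding R_def by simp
    next
      fix x a assume "x \<in> R" and a: "a \<in> carrier A"
      then have h: "x \<in> P" "cs N x \<in> Q" unfolding R_def by auto
      then have "cs N (x \<cdot> a) \<in> Q" using Qm[OF h(2) a] act[OF h(1) a] by simp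
      then show "x \<cdot> a \<in> R" using submodD(4)[OF P h(1) a] unfolding R_def by simp
    qed
    moreover have "N \<subseteq> R"
    proof
      fix n assume "n \<in> N"
      then have "n \<in> P" "cs N n = N" using NP cs_N_iff[OF N] pC by auto
      then show "n \<in> R" using Q0 unfolding R_def by simp
    qed
    moreover have "R \<subseteq> P" unfolding R_def by blast
    ultimately have "R = N \<or> R = P" using noint by blast
    then show "Q = {mzero ?Q} \<or> Q = mcarrier ?Q"
    proof
      assume RN: "R = N"
      have "Q \<subseteq> {N}"
      proof
        fix X assume "X \<in> Q"
        then obtain y where y: "y \<in> P" "X = cs N y" using Qc by blast
        then have "y \<in> R" using \<open>X \<in> Q\<close> unfolding R_def by simp
        then show "X \<in> {N}" using RN y cs_N_iff[OF N pC[OF y(1)]] by simp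
      qed
      then have "Q = {N}" using Q0 by blast
      then show ?thesis using zero by simp
    next
      assume RP: "R = P"
      have "cs N ` P \<subseteq> Q" using RP unfolding R_def by blast
      then show ?thesis using Qc car by blast
    qed
  qed
  then show ?thesis unfolding simple_mod_def using rmodule_quot[OF N P NP(1)] ne by (intro conjI)
qed

lemma simple_elem: assumes "simple_mod A S" shows "\<exists>g\<in>mcarrier S. g \<noteq> mzero S"
proof -
  have "mzero S \<in> mcarrier S" "mcarrier S \<noteq> {mzero S}" using assms unfolding simple_mod_def rmodule_def by auto
  then show ?thesis by blast
qed

lemma simple_fg: assumes "simple_mod A S" shows "fin_gen A S"
proof -
  obtain g where g: "g \<in> mcarrier S" "g \<noteq> mzero S"
    using simple_elem[OF assms] by blast
  have "\<forall>N. submod A S N \<and> {g} \<subseteq> N \<longrightarrow> N = mcarrier S"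
    using assms g unfolding simple_mod_def by blast
  then show ?thesis unfolding fin_gen_def using g by blast
qed


lemma fg_step: assumes N: "submod A Y N" and P: "submod A Y P" and NP: "N \<subseteq> P"
  and fgN: "fin_gen A (restr Y N)" and sim: "simple_mod A (quot (restr Y P) N)"
  shows "fin_gen A (restr Y P)"
proof -
  let ?Q = "quot (restr Y P) N"
  have PC: "P \<subseteq> C" using submodD(1)[OF P] .
  have NC: "N \<subseteq> C" using submodD(1)[OF N] .
  have pC: "x \<in> P \<Longrightarrow> x \<in> C" for x using PC by blast
  have car: "mcarrier ?Q = cs N ` P" by (rule quot_car)
  have zero: "mzero ?Q = N" by (rule quot_zero)
  have "mcarrier (restr Y N) = N" "mcarrier (restr Y P) = P" unfolding restr_def by simp_all
  then obtain G where G: "finite G" "G \<subseteq> N" "\<forall>R. submod A (restr Y N) R \<and> G \<subseteq> R \<longrightarrow> R = N"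
    using fgN unfolding fin_gen_def by metis
  obtain X where X: "X \<in> mcarrier ?Q" "X \<noteq> N" using simple_elem[OF sim] zero by auto
  then obtain x where x: "x \<in> P" "cs N x \<noteq> N" using car by auto
  have simQ: "\<forall>Q. submod A ?Q Q \<longrightarrow> Q = {N} \<or> Q = mcarrier ?Q" using sim zero unfolding simple_mod_def by auto
  have "\<forall>R. submod A (restr Y P) R \<and> insert x G \<subseteq> R \<longrightarrow> R = P"
  proof (intro allI impI)
    fix R assume h: "submod A (restr Y P) R \<and> insert x G \<subseteq> R"
    then have RP: "R \<subseteq> P" and R: "submod A Y R" and xR: "x \<in> R" and GR: "G \<subseteq> R"
      using submod_restr[OF PC] by auto
    have "submod A Y (R \<inter> N)" using R N unfolding submod_def by auto
    then have "submod A (restr Y N) (R \<inter> N)" using submod_restr[OF NC] by simp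
    then have "R \<inter> N = N" using G GR by blast
    then have NR: "N \<subseteq> R" by blast
    have "submod A ?Q (cs N ` R)" unfolding submod_def
    proof (intro conjI ballI)
      show "cs N ` R \<subseteq> mcarrier ?Q" unfolding car using RP by (rule image_mono)
      have "mzero ?Q = cs N zY" using zero cs_zero[OF N] by simp
      then show "mzero ?Q \<in> cs N ` R" using submodD(2)[OF R] by simp
    next
      fix U V assume "U \<in> cs N ` R" "V \<in> cs N ` R"
      then obtain u v where uv: "u \<in> R" "v \<in> R" "U = cs N u" "V = cs N v" by blast
      have "u \<in> C" "v \<in> C" using uv submodD(1)[OF R] by auto
      then have "madd ?Q U V = cs N (u +\<^sub>Y v)" unfolding uv(3,4) by (rule quot_add[OF N])
      then show "madd ?Q U V \<in> cs N ` R" using submodD(3)[OF R uv(1,2)] by simp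
    next
      fix U a assume "U \<in> cs N ` R" "a \<in> carrier A"
      then obtain u where uv: "u \<in> R" "U = cs N u" by blast
      have "u \<in> C" using uv submodD(1)[OF R] by auto
      then have "mact ?Q U a = cs N (u \<cdot> a)" unfolding uv(2) using quot_act[OF N _ \<open>a \<in> carrier A\<close>] by blast
      then show "mact ?Q U a \<in> cs N ` R" using submodD(4)[OF R uv(1) \<open>a \<in> carrier A\<close>] by simp
    qed
    moreover have "cs N ` R \<noteq> {N}" using xR x by blast
    ultimately have "cs N ` R = mcarrier ?Q" using simQ by blast
    then have all: "cs N ` R = cs N ` P" using car by simp
    show "R = P"
    proof
      show "P \<subseteq> R"
      proof
        fix y assume y: "y \<in> P"
        then obtain r where r: "r \<in> R" "cs N y = cs N r" using all by blast
        have rC: "r \<in> C" using r RP PC by blast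
        have "y \<in> cs N r" using r cs_mem[OF N pC[OF y]] by simp
        then obtain n where n: "n \<in> N" "y = r +\<^sub>Y n" unfolding mcoset_def by blast
        then show "y \<in> R" using submodD(3)[OF R r(1)] NR by blast
      qed
    qed (rule RP)
  qed
  moreover have "finite (insert x G)" "insert x G \<subseteq> P" using G x NP by auto
  ultimately show ?thesis unfolding fin_gen_def using \<open>mcarrier (restr Y P) = P\<close> by metis
qed

lemma fg_series: assumes cs: "comp_series A Y c n"
  shows "\<forall>i\<le>n. fin_gen A (restr Y (c i))"
proof (intro allI impI)
  fix i assume "i \<le> n"
  then show "fin_gen A (restr Y (c i))"
  proof (induction i)
    case 0
    have "c 0 = {zY}" using cs unfolding comp_series_def by simp
    moreover have "fin_gen A (restr Y {zY})"
      unfolding fin_gen_def restr_def submod_def by auto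
    ultimately show ?case by simp
  next
    case (Suc i)
    then show ?case using fg_step[of "c i" "c (Suc i)"] cs unfolding comp_series_def by auto
  qed
qed



lemma series_from:
  assumes fin: "\<exists>us. spans {zY} us"
  shows "submod A Y N \<Longrightarrow> \<exists>c n. c 0 = N \<and> c n = C \<and> (\<forall>i\<le>n. submod A Y (c i))
     \<and> (\<forall>i<n. c i \<subseteq> c (Suc i) \<and> simple_mod A (quot (restr Y (c (Suc i))) (c i)))"
proof (induction "dd N" arbitrary: N rule: less_induct)
  case less
  have kz: "\<And>M. submod A Y M \<Longrightarrow> \<exists>us. spans M us"
  proof -
    fix M assume "submod A Y M"
    then have "ksub M" "{zY} \<subseteq> M" using submod_ksub submodD(2) by auto
    then show "\<exists>us. spans M us" using fin spans_mono[of M "{zY}"] by blast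
  qed
  show ?case
  proof (cases "N = C")
    case True
    let ?c = "\<lambda>i::nat. C"
    have "?c 0 = N \<and> ?c 0 = C \<and> (\<forall>i\<le>0. submod A Y (?c i))
     \<and> (\<forall>i<0. ?c i \<subseteq> ?c (Suc i) \<and> simple_mod A (quot (restr Y (?c (Suc i))) (?c i)))"
      using True submod_C by simp
    then show ?thesis by (intro exI[of _ "\<lambda>i::nat. C"] exI[of _ 0])
  next
    case False
    define S where "S = {M. submod A Y M \<and> N \<subseteq> M \<and> M \<noteq> N}"
    have NC: "N \<subseteq> C" using submodD(1)[OF less.prems] .
    have lessS: "\<And>M. M \<in> S \<Longrightarrow> dd M < dd N"
      using dd_less[OF submod_ksub[OF less.prems] submod_ksub _ _ kz[OF less.prems]] unfolding S_def by blast
    have CS: "C \<in> S" using False NC submod_C unfolding S_def by blast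
    have fD: "finite (dd ` S)" using lessS by (meson finite_lessThan finite_subset image_subsetI lessThan_iff)
    have neD: "dd ` S \<noteq> {}" using CS by blast
    obtain M where M: "M \<in> S" "dd M = Max (dd ` S)" using Max_in[OF fD neD] by auto
    have Msub: "submod A Y M" "N \<subseteq> M" "N \<noteq> M" using M unfolding S_def by auto
    have noint: "\<forall>R. submod A Y R \<and> N \<subseteq> R \<and> R \<subseteq> M \<longrightarrow> R = N \<or> R = M"
    proof (intro allI impI)
      fix R assume R: "submod A Y R \<and> N \<subseteq> R \<and> R \<subseteq> M"
      show "R = N \<or> R = M"
      proof (rule ccontr)
        assume "\<not> (R = N \<or> R = M)"
        then have RS: "R \<in> S" and RM: "R \<noteq> M" using R unfolding S_def by auto
        have "dd M < dd R" using dd_less[OF submod_ksub submod_ksub _ RM kz] R Msub by blast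
        moreover have "dd R \<le> dd M" using M RS fD by simp
        ultimately show False by simp
      qed
    qed
    have sim: "simple_mod A (quot (restr Y M) N)"
      using simple_quot[OF less.prems Msub(1,2,3) noint] .
    obtain c n where c: "c 0 = M" "c n = C" "\<forall>i\<le>n. submod A Y (c i)"
      "\<forall>i<n. c i \<subseteq> c (Suc i) \<and> simple_mod A (quot (restr Y (c (Suc i))) (c i))"
      using less.hyps[OF lessS[OF M(1)] Msub(1)] by blast
    define c' where "c' = (\<lambda>i. case i of 0 \<Rightarrow> N | Suc j \<Rightarrow> c j)"
    have "c' 0 = N" "c' (Suc n) = C" unfolding c'_def using c by simp_all
    moreover have "\<forall>i\<le>Suc n. submod A Y (c' i)"
      unfolding c'_def using c(3) less.prems by (auto split: nat.split)
    moreover have "\<forall>i<Suc n. c' i \<subseteq> c' (Suc i) \<and> simple_mod A (quot (restr Y (c' (Suc i))) (c' i))"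
    proof (intro allI impI)
      fix i assume "i < Suc n"
      then show "c' i \<subseteq> c' (Suc i) \<and> simple_mod A (quot (restr Y (c' (Suc i))) (c' i))"
        using c(1,4) Msub(2) sim unfolding c'_def by (cases i) auto
    qed
    ultimately show ?thesis by (intro exI[of _ c'] exI[of _ "Suc n"]) simp
  qed
qed

lemma series_exists: assumes fin: "\<exists>us. spans {zY} us" shows "\<exists>c n. comp_series A Y c n"
proof -
  have "submod A Y {zY}" unfolding submod_def by simp
  then show ?thesis using series_from[OF fin] unfolding comp_series_def by blast
qed

lemma restr_C[simp]: "restr Y C = Y" unfolding restr_def by simp

lemma restr_simps[simp]: "mcarrier (restr Y P) = P" "madd (restr Y P) = madd Y" "mact (restr Y P) = mact Y" "mzero (restr Y P) = zY"
  unfolding restr_def by simp_all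

lemma rmodule_restr: assumes P: "submod A Y P" shows "rmodule A (restr Y P)"
proof -
  have PC: "P \<subseteq> C" using submodD(1)[OF P] .
  interpret R: ring A by (rule ringA)
  have inv: "\<forall>x\<in>P. \<exists>y\<in>P. x +\<^sub>Y y = zY"
  proof
    fix x assume x: "x \<in> P"
    have xC: "x \<in> C" using x PC by blast
    have e: "x +\<^sub>Y x \<cdot> (\<ominus>\<^bsub>A\<^esub> \<one>\<^bsub>A\<^esub>) = zY" using neg_sc[OF xC, of "\<one>\<^bsub>A\<^esub>"] xC by simp
    have "x \<cdot> (\<ominus>\<^bsub>A\<^esub> \<one>\<^bsub>A\<^esub>) \<in> P" using submodD(4)[OF P x] by simp
    then show "\<exists>y\<in>P. x +\<^sub>Y y = zY" using e by (rule bexI[rotated])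
  qed
  show ?thesis unfolding rmodule_def restr_simps
    using ringA submodD[OF P] inv PC add_assoc add_comm sc_ldist sc_rdist sc_assoc
    by (simp add: subset_iff)
qed

lemma modA_restr: "submod A Y P \<Longrightarrow> fin_gen A (restr Y P) \<Longrightarrow> modA A (restr Y P)"
  unfolding modA_def using rmodule_restr by blast

lemma modA_simple: "simple_mod A S \<Longrightarrow> modA A S"
  unfolding modA_def using simple_fg unfolding simple_mod_def by blast

lemma se: assumes N: "submod A Y N" and P: "submod A Y P" and NP: "N \<subseteq> P"
  shows "short_exact A (restr Y N) (restr Y P) (quot (restr Y P) N) id (cs N)"
proof -
  have PC: "P \<subseteq> C" using submodD(1)[OF P] .
  have pC: "x \<in> P \<Longrightarrow> x \<in> C" for x using PC by blast
  have "rhom A (restr Y N) (restr Y P) id" unfolding rhom_def using NP by auto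
  moreover have "rhom A (restr Y P) (quot (restr Y P) N) (cs N)" unfolding rhom_def
  proof (intro conjI ballI)
    fix x assume "x \<in> mcarrier (restr Y P)"
    then show "cs N x \<in> mcarrier (quot (restr Y P) N)" using quot_car by simp
  next
    fix x y assume "x \<in> mcarrier (restr Y P)" "y \<in> mcarrier (restr Y P)"
    then have "x \<in> C" "y \<in> C" using pC by auto
    then show "cs N (madd (restr Y P) x y) = madd (quot (restr Y P) N) (cs N x) (cs N y)"
      using quot_add[OF N] by simp
  next
    fix x a assume "x \<in> mcarrier (restr Y P)" "a \<in> carrier A"
    then have "x \<in> C" using pC by auto
    then show "cs N (mact (restr Y P) x a) = mact (quot (restr Y P) N) (cs N x) a"
      using quot_act[OF N] \<open>a \<in> carrier A\<close> by simp
  qed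
  moreover have "cs N ` mcarrier (restr Y P) = mcarrier (quot (restr Y P) N)" using quot_car by simp
  moreover have "id ` mcarrier (restr Y N) = {y \<in> mcarrier (restr Y P). cs N y = mzero (quot (restr Y P) N)}"
    using cs_N_iff[OF N] NP pC quot_zero by auto
  ultimately show ?thesis unfolding short_exact_def by simp
qed

lemma zero_in_dual: assumes M: "rmodule A M" shows "dual_zero_elem A M \<in> dual A M"
proof -
  interpret R: ring A by (rule ringA)
  have "\<forall>x\<in>mcarrier M. \<forall>y\<in>mcarrier M. madd M x y \<in> mcarrier M"
       "\<forall>x\<in>mcarrier M. \<forall>a\<in>carrier A. mact M x a \<in> mcarrier M" using M unfolding rmodule_def by auto
  then show ?thesis
    unfolding dual_def dual_zero_elem_def rhom_def regmod_def by auto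
qed

lemma dual_bottom: "dual_is_zero A (restr Y {zY})"
proof -
  interpret R: ring A by (rule ringA)
  have rm0: "rmodule A (restr Y {zY})" using rmodule_restr[of "{zY}"] unfolding submod_def by simp
  have "dual A (restr Y {zY}) \<subseteq> {dual_zero_elem A (restr Y {zY})}"
  proof
    fix f assume f: "f \<in> dual A (restr Y {zY})"
    then have h: "f zY \<in> carrier A" "f zY = f zY \<oplus>\<^bsub>A\<^esub> f zY" "f \<in> extensional {zY}"
      unfolding dual_def rhom_def regmod_def by auto
    then have "f zY = \<zero>\<^bsub>A\<^esub>" using h(1,2) by simp
    then have "f = (\<lambda>x\<in>{zY}. \<zero>\<^bsub>A\<^esub>)" using h(3) by (auto simp: extensional_def)
    then show "f \<in> {dual_zero_elem A (restr Y {zY})}" unfolding dual_zero_elem_def by simp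
  qed
  then show ?thesis unfolding dual_is_zero_def using zero_in_dual[OF rm0] by blast
qed

lemma peD: assumes "perfect_exact A' X Y' Z f g"
  shows "inj_on (dual_map Y' g) (dual A' Z)"
    "dual_map Y' g ` dual A' Z = {\<psi> \<in> dual A' Y'. dual_map X f \<psi> = dual_zero_elem A' X}"
    "dual_map X f ` dual A' Y' = dual A' X"
  using assms unfolding perfect_exact_def by simp_all

definition Hyp :: bool where
  "Hyp \<longleftrightarrow> (\<forall>Y'. submod A Y Y' \<longrightarrow>
           (\<forall>(X :: ('m, 'a) rmod) (S :: ('m set, 'a) rmod) f g.
              modA A X \<and> simple_mod A S \<and> modA A S
              \<and> short_exact A X (restr Y Y') S f g
              \<longrightarrow> perfect_exact A X (restr Y Y') S f g))"

lemma pe_step: assumes H: Hyp and cser: "comp_series A Y c n" and i: "i < n"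
  shows "perfect_exact A (restr Y (c i)) (restr Y (c (Suc i))) (quot (restr Y (c (Suc i))) (c i)) id (cs (c i))"
proof -
  have sub: "submod A Y (c i)" "submod A Y (c (Suc i))" "c i \<subseteq> c (Suc i)"
    and sim: "simple_mod A (quot (restr Y (c (Suc i))) (c i))"
    using cser i unfolding comp_series_def by auto
  have "fin_gen A (restr Y (c i))" using fg_series[OF cser] i by simp
  then have "modA A (restr Y (c i))" using modA_restr sub by blast
  moreover have "modA A (quot (restr Y (c (Suc i))) (c i))" using modA_simple[OF sim] .
  moreover have "short_exact A (restr Y (c i)) (restr Y (c (Suc i))) (quot (restr Y (c (Suc i))) (c i)) id (cs (c i))"
    using se[OF sub] .
  ultimately show ?thesis using H[unfolded Hyp_def, rule_format, OF sub(2)] sim by blast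
qed

lemma dual_map_id_zero: assumes "N \<subseteq> P"
  shows "dual_map (restr Y N) id (dual_zero_elem A (restr Y P)) = dual_zero_elem A (restr Y N)"
  unfolding dual_map_def dual_zero_elem_def using assms by (auto intro!: ext simp: restrict_def)

lemma dir1: assumes H: Hyp and Yz: "dual_is_zero A Y" shows "comp_factor_dual_zero A Y"
  unfolding comp_factor_dual_zero_def
proof (intro allI impI, elim conjE)
  fix c n i assume cser: "comp_series A Y c n" and i: "i < n"
  have down: "\<forall>m\<le>n. dual_is_zero A (restr Y (c (n - m)))"
  proof (intro allI impI)
    fix m assume "m \<le> n"
    then show "dual_is_zero A (restr Y (c (n - m)))"
    proof (induction m)
      case 0
      have "c n = C" using cser unfolding comp_series_def by blast
      then show ?case using Yz by simp
    next
      case (Suc m)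
      define j where "j = n - Suc m"
      have j: "j < n" "Suc j = n - m" using Suc.prems unfolding j_def by auto
      have "m \<le> n" using Suc.prems by simp
      then have "dual_is_zero A (restr Y (c (n - m)))" by (rule Suc.IH)
      then have IH: "dual_is_zero A (restr Y (c (Suc j)))" using j(2) by simp
      have pe: "perfect_exact A (restr Y (c j)) (restr Y (c (Suc j))) (quot (restr Y (c (Suc j))) (c j)) id (cs (c j))"
        using pe_step[OF H cser j(1)] .
      have sub: "c j \<subseteq> c (Suc j)" using cser j(1) unfolding comp_series_def by blast
      have "dual_map (restr Y (c j)) id ` dual A (restr Y (c (Suc j))) = dual A (restr Y (c j))"
        using peD(3)[OF pe] .
      moreover have "dual A (restr Y (c (Suc j))) = {dual_zero_elem A (restr Y (c (Suc j)))}"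
        using IH unfolding dual_is_zero_def .
      ultimately have "dual A (restr Y (c j)) = {dual_zero_elem A (restr Y (c j))}"
        using dual_map_id_zero[OF sub] by simp
      then have "dual_is_zero A (restr Y (c j))" unfolding dual_is_zero_def .
      then show ?case unfolding j_def .
    qed
  qed
  have "n - Suc i \<le> n" by simp
  then have Z0: "dual_is_zero A (restr Y (c (n - (n - Suc i))))" using down by blast
  have "n - (n - Suc i) = Suc i" using i by simp
  then have Z: "dual_is_zero A (restr Y (c (Suc i)))" using Z0 by metis
  let ?S = "quot (restr Y (c (Suc i))) (c i)"
  let ?g = "dual_map (restr Y (c (Suc i))) (cs (c i))"
  have pe: "perfect_exact A (restr Y (c i)) (restr Y (c (Suc i))) ?S id (cs (c i))"
    using pe_step[OF H cser i] .
  have inj: "inj_on ?g (dual A ?S)" using peD(1)[OF pe] .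
  have img: "?g ` dual A ?S \<subseteq> dual A (restr Y (c (Suc i)))"
    unfolding peD(2)[OF pe] by blast
  have sim: "simple_mod A ?S" using cser i unfolding comp_series_def by auto
  have "rmodule A ?S" using sim unfolding simple_mod_def by blast
  then have zS: "dual_zero_elem A ?S \<in> dual A ?S" by (rule zero_in_dual)
  have DY: "dual A (restr Y (c (Suc i))) = {dual_zero_elem A (restr Y (c (Suc i)))}" using Z unfolding dual_is_zero_def .
  have "dual A ?S \<subseteq> {dual_zero_elem A ?S}"
  proof
    fix \<phi> assume \<phi>: "\<phi> \<in> dual A ?S"
    have "?g \<phi> \<in> dual A (restr Y (c (Suc i)))" "?g (dual_zero_elem A ?S) \<in> dual A (restr Y (c (Suc i)))"
      using img \<phi> zS by blast+
    then have "?g \<phi> = ?g (dual_zero_elem A ?S)" unfolding DY by simp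
    then have "\<phi> = dual_zero_elem A ?S" using inj_onD[OF inj _ \<phi> zS] by blast
    then show "\<phi> \<in> {dual_zero_elem A ?S}" by simp
  qed
  then show "dual_is_zero A ?S" unfolding dual_is_zero_def using zS by blast
qed

lemma dir2: assumes H: Hyp and fin: "\<exists>us. spans {zY} us" and F: "comp_factor_dual_zero A Y"
  shows "dual_is_zero A Y"
proof -
  obtain c n where cser: "comp_series A Y c n" using series_exists[OF fin] by blast
  have "\<forall>j\<le>n. dual_is_zero A (restr Y (c j))"
  proof (intro allI impI)
    fix j assume "j \<le> n"
    then show "dual_is_zero A (restr Y (c j))"
    proof (induction j)
      case 0
      have "c 0 = {zY}" using cser unfolding comp_series_def by blast
      then show ?case using dual_bottom by simp
    next
      case (Suc j)
      then have j: "j < n" by simp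
      have "j \<le> n" using j by simp
      then have IH: "dual_is_zero A (restr Y (c j))" by (rule Suc.IH)
      let ?S = "quot (restr Y (c (Suc j))) (c j)"
      let ?Y' = "restr Y (c (Suc j))"
      let ?X = "restr Y (c j)"
      have pe: "perfect_exact A ?X ?Y' ?S id (cs (c j))" using pe_step[OF H cser j] .
      have SZ: "dual_is_zero A ?S" using F[unfolded comp_factor_dual_zero_def, rule_format, of c n j] cser j by blast
      have "Suc j \<le> n" using j by simp
      then have sub: "submod A Y (c (Suc j))" using cser unfolding comp_series_def by blast
      have rm: "rmodule A ?Y'" using rmodule_restr[OF sub] .
      have "dual A ?Y' \<subseteq> {dual_zero_elem A ?Y'}"
      proof
        fix \<phi> assume \<phi>: "\<phi> \<in> dual A ?Y'"
        have "dual_map ?X id \<phi> \<in> dual A ?X" using peD(3)[OF pe] \<phi> by blast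
        moreover have "dual A ?X = {dual_zero_elem A ?X}" using IH unfolding dual_is_zero_def .
        ultimately have "dual_map ?X id \<phi> = dual_zero_elem A ?X" by simp
        then have "\<phi> \<in> dual_map ?Y' (cs (c j)) ` dual A ?S"
          unfolding peD(2)[OF pe] using \<phi> by blast
        then have "\<phi> = dual_map ?Y' (cs (c j)) (dual_zero_elem A ?S)"
          using SZ[unfolded dual_is_zero_def] by simp
        also have "\<dots> = dual_zero_elem A ?Y'"
          unfolding dual_map_def dual_zero_elem_def using quot_car
          by (auto intro!: ext simp: restrict_def)
        finally show "\<phi> \<in> {dual_zero_elem A ?Y'}" by simp
      qed
      then have "dual A ?Y' = {dual_zero_elem A ?Y'}" using zero_in_dual[OF rm] by blast
      then show ?case unfolding dual_is_zero_def .
    qed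
  qed
  then have "dual_is_zero A (restr Y (c n))" by blast
  moreover have "c n = C" using cser unfolding comp_series_def by blast
  ultimately show ?thesis by simp
qed

lemma ksub_zero: "ksub {zY}" unfolding ksub_def using k_ring by auto

lemma lin_subset_lists: assumes "ksub B" "set ys \<subseteq> C" "set xs \<subseteq> set ys" shows "lin B xs \<subseteq> lin B ys"
proof -
  have "set xs \<subseteq> lin B ys" using list_sub_lin[OF assms(1,2)] assms(3) by blast
  then show ?thesis using lin_min[OF ksub_lin[OF assms(1,2)] base_sub_lin[OF assms(1,2)]] by blast
qed

lemma mult_in_Span: assumes g: "g \<in> C" and Us: "set Us \<subseteq> carrier A"
  shows "a \<in> ring.Span A k Us \<Longrightarrow> g \<cdot> a \<in> lin {zY} (map (\<lambda>u. g \<cdot> u) Us)"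
  using Us
proof (induction Us arbitrary: a)
  case Nil
  interpret R: ring A by (rule ringA)
  show ?case using g Nil by simp
next
  case (Cons u Us)
  interpret R: ring A by (rule ringA)
  have "a \<in> R.line_extension k u (R.Span k Us)" using Cons.prems by simp
  then obtain c v where cv: "c \<in> k" "v \<in> R.Span k Us" "a = c \<otimes>\<^bsub>A\<^esub> u \<oplus>\<^bsub>A\<^esub> v"
    unfolding R.line_extension_mem_iff by blast
  have uA: "u \<in> carrier A" and UsA: "set Us \<subseteq> carrier A" using Cons.prems by auto
  have vA: "v \<in> carrier A" using R.Span_in_carrier[OF k_sub UsA] cv by blast
  have cA: "c \<in> carrier A" using cv k_ring by blast
  have "g \<cdot> a = g \<cdot> (c \<otimes>\<^bsub>A\<^esub> u) +\<^sub>Y g \<cdot> v" using cv g uA vA cA by (simp add: sc_rdist)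
  also have "c \<otimes>\<^bsub>A\<^esub> u = u \<otimes>\<^bsub>A\<^esub> c" using central cv uA by blast
  also have "g \<cdot> (u \<otimes>\<^bsub>A\<^esub> c) = (g \<cdot> u) \<cdot> c" using g uA cA by (simp add: sc_assoc)
  finally have e: "g \<cdot> a = (g \<cdot> u) \<cdot> c +\<^sub>Y g \<cdot> v" .
  have "g \<cdot> v \<in> lin {zY} (map (\<lambda>u. g \<cdot> u) Us)" using Cons.IH[OF _ UsA] cv by blast
  then show ?case unfolding e using lin_ConsI[OF cv(1)] by simp
qed

lemma lin_Aclosed: assumes W: "ksub W"
  and vs: "set vs \<subseteq> C" "\<forall>u\<in>set vs. \<forall>a\<in>carrier A. u \<cdot> a \<in> W"
  shows "x \<in> lin {zY} vs \<Longrightarrow> a \<in> carrier A \<Longrightarrow> x \<cdot> a \<in> W"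
  using vs
proof (induction vs arbitrary: x)
  case Nil then show ?case using W unfolding ksub_def by simp
next
  case (Cons u vs)
  interpret R: ring A by (rule ringA)
  from Cons.prems(1) obtain c v where cv: "c \<in> k" "v \<in> lin {zY} vs" "x = u \<cdot> c +\<^sub>Y v" by (rule lin_ConsE)
  have uC: "u \<in> C" and vsC: "set vs \<subseteq> C" using Cons.prems by auto
  have vC: "v \<in> C" using lin_sub_C[OF ksub_zero vsC] cv by blast
  have a: "a \<in> carrier A" using Cons.prems by simp
  have cA: "c \<in> carrier A" using cv k_ring by blast
  have "x \<cdot> a = u \<cdot> (c \<otimes>\<^bsub>A\<^esub> a) +\<^sub>Y v \<cdot> a" using cv uC vC a cA by (simp add: sc_ldist sc_assoc)
  also have "c \<otimes>\<^bsub>A\<^esub> a = a \<otimes>\<^bsub>A\<^esub> c" using central cv a by blast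
  also have "u \<cdot> (a \<otimes>\<^bsub>A\<^esub> c) = (u \<cdot> a) \<cdot> c" using uC a cA by (simp add: sc_assoc)
  finally have e: "x \<cdot> a = (u \<cdot> a) \<cdot> c +\<^sub>Y v \<cdot> a" .
  have "u \<cdot> a \<in> W" using Cons.prems a by simp
  then have 1: "(u \<cdot> a) \<cdot> c \<in> W" using W cv unfolding ksub_def by blast
  have 2: "v \<cdot> a \<in> W" using Cons.IH[OF cv(2) a vsC] Cons.prems(4) by simp
  show ?case unfolding e using 1 2 W unfolding ksub_def by blast
qed

lemma spanning: assumes fd: "ring.finite_dimension A k (carrier A)" and fg: "fin_gen A Y"
  shows "\<exists>us. spans {zY} us"
proof -
  interpret R: ring A by (rule ringA)
  obtain dn where "R.dimension dn k (carrier A)" using fd R.finite_dimension_def by blast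
  then obtain Us where Us: "set Us \<subseteq> carrier A" "R.Span k Us = carrier A"
    using R.exists_base[OF sf] by blast
  obtain G where G: "finite G" "G \<subseteq> C" "\<forall>N. submod A Y N \<and> G \<subseteq> N \<longrightarrow> N = C"
    using fg unfolding fin_gen_def by blast
  obtain gs where gs: "set gs = G" using finite_list[OF G(1)] by blast
  define us where "us = concat (map (\<lambda>g. map (\<lambda>u. g \<cdot> u) Us) gs)"
  have usC: "set us \<subseteq> C" unfolding us_def using G(2) gs Us(1) by (auto intro!: sc_in)
  define T where "T = lin {zY} us"
  have kT: "ksub T" unfolding T_def using ksub_lin[OF ksub_zero usC] .
  have sub_g: "lin {zY} (map (\<lambda>u. g \<cdot> u) Us) \<subseteq> T" if g: "g \<in> G" for g
  proof -
    have "set (map (\<lambda>u. g \<cdot> u) Us) \<subseteq> set us" using g gs unfolding us_def by auto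
    then show ?thesis unfolding T_def using lin_subset_lists[OF ksub_zero usC] by blast
  qed
  have gen: "\<forall>u\<in>set us. \<forall>a\<in>carrier A. u \<cdot> a \<in> T"
  proof (intro ballI)
    fix u a assume u: "u \<in> set us" and a: "a \<in> carrier A"
    then obtain g w where gw: "g \<in> G" "w \<in> set Us" "u = g \<cdot> w" unfolding us_def using gs by auto
    have gC: "g \<in> C" using gw G by blast
    have wA: "w \<in> carrier A" using gw Us by blast
    have "u \<cdot> a = g \<cdot> (w \<otimes>\<^bsub>A\<^esub> a)" using gw gC wA a by (simp add: sc_assoc)
    moreover have "w \<otimes>\<^bsub>A\<^esub> a \<in> R.Span k Us" using Us(2) wA a by simp
    ultimately show "u \<cdot> a \<in> T" using mult_in_Span[OF gC Us(1)] sub_g[OF gw(1)] by auto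
  qed
  have "submod A Y T" unfolding submod_def
  proof (intro conjI ballI)
    show "T \<subseteq> C" "zY \<in> T" using kT unfolding ksub_def by auto
  next
    fix x y assume "x \<in> T" "y \<in> T" then show "x +\<^sub>Y y \<in> T" using kT unfolding ksub_def by blast
  next
    fix x a assume "x \<in> T" "a \<in> carrier A" then show "x \<cdot> a \<in> T"
      using lin_Aclosed[OF kT usC gen] unfolding T_def by blast
  qed
  moreover have "G \<subseteq> T"
  proof
    fix g assume g: "g \<in> G"
    then have gC: "g \<in> C" using G by blast
    have "\<one>\<^bsub>A\<^esub> \<in> R.Span k Us" using Us(2) by simp
    then have "g \<cdot> \<one>\<^bsub>A\<^esub> \<in> T" using mult_in_Span[OF gC Us(1)] sub_g[OF g] by blast
    then show "g \<in> T" using gC by simp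
  qed
  ultimately have "T = C" using G(3) by blast
  then show ?thesis unfolding spans_def T_def using usC by blast
qed

end

theorem mainTheorem16:
  fixes k :: "'a set" and A :: "('a, 'b) ring_scheme" and Y :: "('m, 'a) rmod"
  assumes "fd_algebra k A"
    and "modA A Y"
    and "\<forall>Y'. submod A Y Y' \<longrightarrow>
           (\<forall>(X :: ('m, 'a) rmod) (S :: ('m set, 'a) rmod) f g.
              modA A X \<and> simple_mod A S \<and> modA A S
              \<and> short_exact A X (restr Y Y') S f g
              \<longrightarrow> perfect_exact A X (restr Y Y') S f g)"
  shows "dual_is_zero A Y \<longleftrightarrow> comp_factor_dual_zero A Y"
proof -
  have fd: "ring A" "subfield k A" "\<forall>c\<in>k. \<forall>a\<in>carrier A. c \<otimes>\<^bsub>A\<^esub> a = a \<otimes>\<^bsub>A\<^esub> c"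
    "ring.finite_dimension A k (carrier A)"
    using assms(1) unfolding fd_algebra_def by auto
  have rmY: "rmodule A Y" and fgY: "fin_gen A Y" using assms(2) unfolding modA_def by auto
  interpret S: setting A Y k
    by (rule setting.intro[OF rmY fd(2) fd(3)])
  have H: "S.Hyp" unfolding S.Hyp_def using assms(3) .
  have fin: "\<exists>us. S.spans {mzero Y} us" using S.spanning[OF fd(4) fgY] .
  show ?thesis using S.dir1[OF H] S.dir2[OF H fin] by blast
qed

end
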